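(* Let $q$ be a self-join-free Boolean conjunctive query, let $q_0\subseteq q$, and let $\mathbf{db}$ be a database. If $\mathbf{o}$ is a garbage set for $q_0$ in $\mathbf{db}$ and $\mathbf{p}$ is a garbage set for $q_0$ in $\mathbf{db}\setminus\mathbf{o}$, then $\mathbf{o}\cup\mathbf{p}$ is a garbage set for $q_0$ in $\mathbf{db}$.
   Context: Every relation name has a signature $[n,k]$ ($1\le k\le n$; primary-key positions $1,\dots,k$) and a mode in $\{\mathsf{c},\mathsf{i}\}$. Facts are variable-free atoms; facts are key-equal if same relation name and same primary-key values. A database is a finite set of facts with no two distinct key-equal facts of mode $\mathsf{c}$, all of whose relation names occur in $q$. The block of a fact $A$ in $\mathbf{db}$ is the set of facts of $\mathbf{db}$ key-equal to $A$. A repair of a set of facts is a maximal subset without two distinct key-equal facts. A self-join-free Boolean conjunctive query is a finite set of atoms with distinct relation names; for a fact $A$, $\mathrm{atom}(A)$ is the atom of $q$ with the same relation name. A subset $\mathbf{o}\subseteq\mathbf{db}$ is a garbage set for $q_0$ in $\mathbf{db}$ if (1) for every $A\in\mathbf{o}$, $\mathrm{atom}(A)\in q_0$ and the block of $A$ in $\mathbf{db}$ is included in $\mathbf{o}$; and (2) there is a repair $\mathbf{r}$ of $\mathbf{o}$ such that for every valuation $\theta$ of the variables of $q$, if $\theta(q)\subseteq(\mathbf{db}\setminus\mathbf{o})\cup\mathbf{r}$ then $\theta(q_0)\cap\mathbf{r}=\emptyset$. *)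

theory Defs
  imports Main
begin

(* Modes of relation names: consistent (c) or inconsistent (i). *)
datatype mode = ModeC | ModeI

datatype ('v, 'c) trm = Var 'v | Cst 'c

type_synonym ('r, 'v, 'c) atom = "'r \<times> ('v, 'c) trm list"
type_synonym ('r, 'c) fact = "'r \<times> 'c list"

(* A schema assigns every relation name its signature [n,k] and its mode: sig R = (n, k, mode). *)
type_synonym 'r schema = "'r \<Rightarrow> nat \<times> nat \<times> mode"

definition arity :: "'r schema \<Rightarrow> 'r \<Rightarrow> nat" where
  "arity sig R = fst (sig R)"

definition keylen :: "'r schema \<Rightarrow> 'r \<Rightarrow> nat" where
  "keylen sig R = fst (snd (sig R))"

definition rmode :: "'r schema \<Rightarrow> 'r \<Rightarrow> mode" where
  "rmode sig R = snd (snd (sig R))"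

definition schema_wf :: "'r schema \<Rightarrow> bool" where
  "schema_wf sig \<longleftrightarrow> (\<forall>R. 1 \<le> keylen sig R \<and> keylen sig R \<le> arity sig R)"

definition key_equal :: "'r schema \<Rightarrow> ('r, 'c) fact \<Rightarrow> ('r, 'c) fact \<Rightarrow> bool" where
  "key_equal sig A B \<longleftrightarrow> fst A = fst B \<and>
     take (keylen sig (fst A)) (snd A) = take (keylen sig (fst B)) (snd B)"

definition block :: "'r schema \<Rightarrow> ('r, 'c) fact set \<Rightarrow> ('r, 'c) fact \<Rightarrow> ('r, 'c) fact set" where
  "block sig db A = {B \<in> db. key_equal sig A B}"

definition consistent :: "'r schema \<Rightarrow> ('r, 'c) fact set \<Rightarrow> bool" where
  "consistent sig S \<longleftrightarrow> (\<forall>A\<in>S. \<forall>B\<in>S. key_equal sig A B \<longrightarrow> A = B)"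

definition is_repair :: "'r schema \<Rightarrow> ('r, 'c) fact set \<Rightarrow> ('r, 'c) fact set \<Rightarrow> bool" where
  "is_repair sig S r \<longleftrightarrow> r \<subseteq> S \<and> consistent sig r \<and>
     (\<forall>r'. r \<subseteq> r' \<and> r' \<subseteq> S \<and> consistent sig r' \<longrightarrow> r' = r)"

definition sjf_query :: "'r schema \<Rightarrow> ('r, 'v, 'c) atom set \<Rightarrow> bool" where
  "sjf_query sig q \<longleftrightarrow> finite q \<and>
     (\<forall>a\<in>q. \<forall>b\<in>q. fst a = fst b \<longrightarrow> a = b) \<and>
     (\<forall>a\<in>q. length (snd a) = arity sig (fst a))"

definition is_database :: "'r schema \<Rightarrow> ('r, 'v, 'c) atom set \<Rightarrow> ('r, 'c) fact set \<Rightarrow> bool" where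
  "is_database sig q db \<longleftrightarrow> finite db \<and>
     (\<forall>A\<in>db. fst A \<in> fst ` q \<and> length (snd A) = arity sig (fst A)) \<and>
     (\<forall>A\<in>db. \<forall>B\<in>db. rmode sig (fst A) = ModeC \<and> key_equal sig A B \<longrightarrow> A = B)"

definition inst :: "('v \<Rightarrow> 'c) \<Rightarrow> ('r, 'v, 'c) atom \<Rightarrow> ('r, 'c) fact" where
  "inst \<theta> a = (fst a, map (\<lambda>t. case t of Var x \<Rightarrow> \<theta> x | Cst c \<Rightarrow> c) (snd a))"

definition atom_of :: "('r, 'v, 'c) atom set \<Rightarrow> ('r, 'c) fact \<Rightarrow> ('r, 'v, 'c) atom" where
  "atom_of q A = (THE a. a \<in> q \<and> fst a = fst A)"

definition garbage_set :: "'r schema \<Rightarrow> ('r, 'v, 'c) atom set \<Rightarrow> ('r, 'v, 'c) atom set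
    \<Rightarrow> ('r, 'c) fact set \<Rightarrow> ('r, 'c) fact set \<Rightarrow> bool" where
  "garbage_set sig q q0 db ob \<longleftrightarrow> ob \<subseteq> db \<and>
     (\<forall>A\<in>ob. atom_of q A \<in> q0 \<and> block sig db A \<subseteq> ob) \<and>
     (\<exists>r. is_repair sig ob r \<and>
        (\<forall>\<theta>. inst \<theta> ` q \<subseteq> (db - ob) \<union> r \<longrightarrow> inst \<theta> ` q0 \<inter> r = {}))"

end

theory Submission
  imports Defs
begin

lemma key_equal_sym: "key_equal sig A B \<Longrightarrow> key_equal sig B A"
  unfolding key_equal_def by auto

lemma atom_of_inst:
  assumes "sjf_query sig q" "a \<in> q"
  shows "atom_of q (inst \<theta> a) = a"
proof -
  have "fst (inst \<theta> a) = fst a" by (simp add: inst_def)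
  moreover have "\<And>b. b \<in> q \<and> fst b = fst a \<Longrightarrow> b = a"
    using assms unfolding sjf_query_def by blast
  ultimately show ?thesis unfolding atom_of_def using assms(2)
    by (metis (mono_tags, lifting) the_equality)
qed

theorem lemma32:
  fixes sig :: "'r schema"
    and q q0 :: "('r, 'v, 'c) atom set"
    and db ob p :: "('r, 'c) fact set"
  assumes "schema_wf sig"
    and "sjf_query sig q"
    and "q0 \<subseteq> q"
    and "is_database sig q db"
    and "garbage_set sig q q0 db ob"
    and "garbage_set sig q q0 (db - ob) p"
  shows "garbage_set sig q q0 db (ob \<union> p)"
proof -
  from assms(5) have ob: "ob \<subseteq> db" and obA: "\<forall>A\<in>ob. atom_of q A \<in> q0 \<and> block sig db A \<subseteq> ob"
    and "\<exists>r. is_repair sig ob r \<and>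
        (\<forall>\<theta>. inst \<theta> ` q \<subseteq> (db - ob) \<union> r \<longrightarrow> inst \<theta> ` q0 \<inter> r = {})"
    unfolding garbage_set_def by auto
  then obtain r1 where r1: "is_repair sig ob r1"
    and r1g: "\<And>\<theta>. inst \<theta> ` q \<subseteq> (db - ob) \<union> r1 \<Longrightarrow> inst \<theta> ` q0 \<inter> r1 = {}" by blast
  from assms(6) have p: "p \<subseteq> db - ob" and pA: "\<forall>A\<in>p. atom_of q A \<in> q0 \<and> block sig (db - ob) A \<subseteq> p"
    and "\<exists>r. is_repair sig p r \<and>
        (\<forall>\<theta>. inst \<theta> ` q \<subseteq> ((db - ob) - p) \<union> r \<longrightarrow> inst \<theta> ` q0 \<inter> r = {})"
    unfolding garbage_set_def by auto
  then obtain r2 where r2: "is_repair sig p r2"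
    and r2g: "\<And>\<theta>. inst \<theta> ` q \<subseteq> ((db - ob) - p) \<union> r2 \<Longrightarrow> inst \<theta> ` q0 \<inter> r2 = {}" by blast
  have r1s: "r1 \<subseteq> ob" "consistent sig r1"
    "\<And>r'. r1 \<subseteq> r' \<Longrightarrow> r' \<subseteq> ob \<Longrightarrow> consistent sig r' \<Longrightarrow> r' = r1"
    using r1 unfolding is_repair_def by auto
  have r2s: "r2 \<subseteq> p" "consistent sig r2"
    "\<And>r'. r2 \<subseteq> r' \<Longrightarrow> r' \<subseteq> p \<Longrightarrow> consistent sig r' \<Longrightarrow> r' = r2"
    using r2 unfolding is_repair_def by auto
  have blocks: "\<forall>A\<in>ob \<union> p. atom_of q A \<in> q0 \<and> block sig db A \<subseteq> ob \<union> p"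
    using obA pA unfolding block_def by blast
  have cross: "\<And>A B. A \<in> ob \<Longrightarrow> B \<in> p \<Longrightarrow> key_equal sig A B \<Longrightarrow> False"
    using obA p unfolding block_def by blast
  have cons: "consistent sig (r1 \<union> r2)"
    unfolding consistent_def
  proof (intro ballI impI)
    fix A B assume A: "A \<in> r1 \<union> r2" and B: "B \<in> r1 \<union> r2" and k: "key_equal sig A B"
    show "A = B"
      using A B k r1s(1,2) r2s(1,2) cross[of A B] cross[of B A] key_equal_sym[OF k]
      unfolding consistent_def by blast
  qed
  have consub: "\<And>S T. consistent sig S \<Longrightarrow> T \<subseteq> S \<Longrightarrow> consistent sig T"
    unfolding consistent_def by blast
  have rep: "is_repair sig (ob \<union> p) (r1 \<union> r2)"
    unfolding is_repair_def
  proof (intro conjI allI impI)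
    show "r1 \<union> r2 \<subseteq> ob \<union> p" using r1s r2s by blast
    show "consistent sig (r1 \<union> r2)" by (rule cons)
    fix r' assume h: "r1 \<union> r2 \<subseteq> r' \<and> r' \<subseteq> ob \<union> p \<and> consistent sig r'"
    have c1: "consistent sig (r' \<inter> ob)" using h consub[of r' "r' \<inter> ob"] by simp
    have c2: "consistent sig (r' \<inter> p)" using h consub[of r' "r' \<inter> p"] by simp
    have s1: "r1 \<subseteq> r' \<inter> ob" using h r1s(1) by blast
    have s2: "r2 \<subseteq> r' \<inter> p" using h r2s(1) by blast
    have "r' \<inter> ob = r1" by (rule r1s(3)[OF s1 _ c1]) simp
    moreover have "r' \<inter> p = r2" by (rule r2s(3)[OF s2 _ c2]) simp
    ultimately show "r' = r1 \<union> r2" using h by blast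
  qed
  have good: "\<forall>\<theta>. inst \<theta> ` q \<subseteq> (db - (ob \<union> p)) \<union> (r1 \<union> r2) \<longrightarrow> inst \<theta> ` q0 \<inter> (r1 \<union> r2) = {}"
  proof (intro allI impI)
    fix \<theta> assume h: "inst \<theta> ` q \<subseteq> (db - (ob \<union> p)) \<union> (r1 \<union> r2)"
    have "inst \<theta> ` q \<subseteq> (db - ob) \<union> r1" using h p r2s(1) by blast
    then have d1: "inst \<theta> ` q0 \<inter> r1 = {}" by (rule r1g)
    have nr1: "\<And>a. a \<in> q \<Longrightarrow> inst \<theta> a \<notin> r1"
    proof
      fix a assume a: "a \<in> q" "inst \<theta> a \<in> r1"
      then have "atom_of q (inst \<theta> a) \<in> q0" using obA r1s(1) by blast
      then have "a \<in> q0" using atom_of_inst[OF assms(2) a(1)] by simp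
      then show False using d1 a(2) by blast
    qed
    have "inst \<theta> ` q \<subseteq> ((db - ob) - p) \<union> r2" using h nr1 by blast
    then have "inst \<theta> ` q0 \<inter> r2 = {}" by (rule r2g)
    then show "inst \<theta> ` q0 \<inter> (r1 \<union> r2) = {}" using d1 by blast
  qed
  show ?thesis unfolding garbage_set_def using ob p blocks rep good by blast
qed

end
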